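(* Let $a\in[0,\infty)$ and let $t:[0,1]\to[0,\infty]$ and $s:[0,\infty]\to[0,1]$ be continuous and increasing functions such that (1) $t(x)=\infty$ if and only if $x=1$; (2) $t(x)=\frac{a}{2}$ if and only if $x=0$; (3) $s(x)=0$ if and only if $x\in[0,a]$; (4) $s(x)=1$ if and only if $x=\infty$. Then the function $G_{t,s}:[0,1]^2\to[0,1]$ defined by $G_{t,s}(x,y)=s(t(x)+t(y))$ is a grouping function.
   Context: "Increasing" means non-decreasing. Arithmetic in $[0,\infty]$ uses $c+\infty=\infty$; continuity on $[0,\infty]$ refers to the usual topology of the extended half-line. A grouping function is a map $G:[0,1]^2\to[0,1]$ that is (G1) commutative, (G2) $G(x,y)=0$ iff $x=y=0$, (G3) $G(x,y)=1$ iff $x=1$ or $y=1$, (G4) increasing in each variable, (G5) continuous. *)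

theory Defs
  imports "HOL-Analysis.Analysis" "HOL-Library.Extended_Nonnegative_Real"
begin

text \<open>The extended half-line [0,\<infinity>] is modelled by ennreal.
  A grouping function on the unit square, relativised to [0,1]^2.\<close>

definition grouping_function :: "(real \<Rightarrow> real \<Rightarrow> real) \<Rightarrow> bool" where
  "grouping_function G \<longleftrightarrow>
     (\<forall>x\<in>{0..1}. \<forall>y\<in>{0..1}. G x y \<in> {0..1}) \<and>
     (\<forall>x\<in>{0..1}. \<forall>y\<in>{0..1}. G x y = G y x) \<and>
     (\<forall>x\<in>{0..1}. \<forall>y\<in>{0..1}. G x y = 0 \<longleftrightarrow> x = 0 \<and> y = 0) \<and>
     (\<forall>x\<in>{0..1}. \<forall>y\<in>{0..1}. G x y = 1 \<longleftrightarrow> x = 1 \<or> y = 1) \<and>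
     (\<forall>x\<in>{0..1}. \<forall>x'\<in>{0..1}. \<forall>y\<in>{0..1}. x \<le> x' \<longrightarrow> G x y \<le> G x' y) \<and>
     (\<forall>x\<in>{0..1}. \<forall>y\<in>{0..1}. \<forall>y'\<in>{0..1}. y \<le> y' \<longrightarrow> G x y \<le> G x y') \<and>
     continuous_on ({0..1} \<times> {0..1}) (\<lambda>(x, y). G x y)"

end

theory Submission
  imports Defs
begin

theorem theorem6p2:
  fixes a :: real and t :: "real \<Rightarrow> ennreal" and s :: "ennreal \<Rightarrow> real"
  assumes a_nonneg: "0 \<le> a"
    and t_cont: "continuous_on {0..1} t"
    and t_mono: "mono_on {0..1} t"
    and s_cont: "continuous_on UNIV s"
    and s_mono: "mono s"
    and s_range: "\<forall>z. s z \<in> {0..1}"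
    and t1: "\<forall>x\<in>{0..1}. t x = \<infinity> \<longleftrightarrow> x = 1"
    and t2: "\<forall>x\<in>{0..1}. t x = ennreal (a / 2) \<longleftrightarrow> x = 0"
    and s3: "\<forall>z. s z = 0 \<longleftrightarrow> z \<le> ennreal a"
    and s4: "\<forall>z. s z = 1 \<longleftrightarrow> z = \<infinity>"
  shows "grouping_function (\<lambda>x y. s (t x + t y))"
proof -
  have tlow: "ennreal (a/2) \<le> t x" if "x \<in> {0..1}" for x
  proof -
    have "t 0 \<le> t x" using t_mono that by (auto intro: mono_onD)
    moreover have "t 0 = ennreal (a/2)" using t2 by auto
    ultimately show ?thesis by simp
  qed
  have half: "ennreal (a/2) + ennreal (a/2) = ennreal a"
    using a_nonneg by (simp flip: ennreal_plus)
  have z: "s (t x + t y) = 0 \<longleftrightarrow> x = 0 \<and> y = 0" if "x \<in> {0..1}" "y \<in> {0..1}" for x y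
  proof
    assume h: "s (t x + t y) = 0"
    then have le: "t x + t y \<le> ennreal a" using s3 by auto
    have "t x \<le> ennreal a" using le add_increasing2[of "t y" "t x" "t x"] by (meson order.trans zero_le order_refl)
    then have "t x \<noteq> \<infinity>" using ennreal_less_top[of a] by (metis infinity_ennreal_def leD)
    then obtain u where u: "t x = ennreal u" "u \<ge> 0" by (cases "t x") auto
    have "t y \<le> ennreal a" using le add_increasing[of "t x" "t y" "t y"] by (meson order.trans zero_le order_refl)
    then have "t y \<noteq> \<infinity>" using ennreal_less_top[of a] by (metis infinity_ennreal_def leD)
    then obtain v where v: "t y = ennreal v" "v \<ge> 0" by (cases "t y") auto
    have "ennreal (a/2) \<le> ennreal u" "ennreal (a/2) \<le> ennreal v"
      using tlow[OF that(1)] tlow[OF that(2)] u v by auto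
    then have "a/2 \<le> u" "a/2 \<le> v" using u v by (auto simp: ennreal_le_iff)
    moreover have "u + v \<le> a" using le u v a_nonneg by (simp flip: ennreal_plus)
    ultimately have "u = a/2" "v = a/2" by auto
    then show "x = 0 \<and> y = 0" using t2 that u v by auto
  next
    assume "x = 0 \<and> y = 0"
    moreover have "t 0 = ennreal (a/2)" using t2 by auto
    ultimately show "s (t x + t y) = 0" using s3 half by simp
  qed
  have o: "s (t x + t y) = 1 \<longleftrightarrow> x = 1 \<or> y = 1" if "x \<in> {0..1}" "y \<in> {0..1}" for x y
    using s4 t1 that by auto
  have m1: "s (t x + t y) \<le> s (t x' + t y)" if "x \<in> {0..1}" "x' \<in> {0..1}" "y \<in> {0..1}" "x \<le> x'" for x x' y
  proof -
    have "t x \<le> t x'" using t_mono that by (auto intro: mono_onD)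
    then show ?thesis using s_mono by (auto intro: monoD add_right_mono)
  qed
  have m2: "s (t x + t y) \<le> s (t x + t y')" if "x \<in> {0..1}" "y' \<in> {0..1}" "y \<in> {0..1}" "y \<le> y'" for x y' y
  proof -
    have "t y \<le> t y'" using t_mono that by (auto intro: mono_onD)
    then show ?thesis using s_mono by (auto intro: monoD add_left_mono)
  qed
  have c1: "continuous_on ({0..1} \<times> {0..1}) (\<lambda>p. t (fst p) + t (snd p))"
  proof (rule continuous_on_add)
    show "continuous_on ({0..1} \<times> {0..1}) (\<lambda>p. t (fst p))"
      by (rule continuous_on_compose2[OF t_cont continuous_on_fst]) auto
    show "continuous_on ({0..1} \<times> {0..1}) (\<lambda>p. t (snd p))"
      by (rule continuous_on_compose2[OF t_cont continuous_on_snd]) auto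
  qed
  have c: "continuous_on ({0..1} \<times> {0..1}) (\<lambda>p. s (t (fst p) + t (snd p)))"
    by (rule continuous_on_compose2[OF s_cont c1]) auto
  show ?thesis
    unfolding grouping_function_def
    using s_range z o m1 m2 c by (auto simp: case_prod_beta add.commute)
qed

end
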